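(* Let $E\ge0$ be an integer and let $\mathbf a=(a_1,\dots,a_m)$ be a partition. Then there exists a partition $\mathbf e=(e_1,\dots,e_{m-1})$ such that $\sum_{i=1}^{m-1}e_i=E$ and $\mathbf a\prec'\mathbf e$ if and only if $$E=\sum_{i=2}^m a_i\quad\text{or}\quad E\ge a_1+\sum_{i=3}^m a_i.$$
   Context: A partition is a nonincreasing finite sequence of nonnegative integers. 1-step generalized majorization: for nonincreasing integer sequences $\mathbf a=(a_1,\dots,a_m)$ and $\mathbf e=(e_1,\dots,e_{m-1})$, set $e_m=-\infty$ and $h=\min\{i: e_i<a_i\}$; then $\mathbf a\prec'\mathbf e$ means $e_i=a_{i+1}$ for all $h\le i\le m-1$. Empty sums are $0$. *)

theory Defs
  imports Main
begin

definition is_partition :: "nat list \<Rightarrow> bool" where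
  "is_partition xs \<longleftrightarrow> sorted_wrt (\<ge>) xs"

text \<open>1-step generalized majorization a \<prec>' e, 0-indexed: a = a!0..a!(m-1),
  e = e!0..e!(m-2), with the convention e!(m-1) = -infinity, so the index
  m-1 always belongs to the set defining h.\<close>
definition gen_maj1 :: "nat list \<Rightarrow> nat list \<Rightarrow> bool" where
  "gen_maj1 a e \<longleftrightarrow>
     length e = length a - 1 \<and>
     (let m = length a;
          h = (LEAST i. i < m \<and> (i = m - 1 \<or> e ! i < a ! i))
      in \<forall>i. h \<le> i \<and> i < m - 1 \<longrightarrow> e ! i = a ! (i + 1))"

end

theory Submission
  imports Defs
begin

lemma sum_list_drop_nth: "sum_list (drop k xs) = (\<Sum>i=k..<length xs. xs!i)"
proof -
  have "sum_list (drop k xs) = (\<Sum>j=0..<length xs - k. xs!(j+k))"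
    by (simp add: sum_list_sum_nth add.commute)
  also have "\<dots> = (\<Sum>i=k..<length xs. xs!i)"
  proof (cases "k \<le> length xs")
    case True
    then show ?thesis using sum.shift_bounds_nat_ivl[of "\<lambda>i. xs!i" 0 k "length xs - k"] by simp
  next
    case False
    then show ?thesis by simp
  qed
  finally show ?thesis .
qed

lemma sum_list_nth0: "sum_list xs = (\<Sum>i<length xs. xs!i)"
  by (simp add: sum_list_sum_nth atLeast0LessThan)

theorem lemma5p2:
  fixes E :: nat and a :: "nat list"
  assumes "is_partition a" and "length a \<ge> 2"
  shows "(\<exists>e. is_partition e \<and> length e = length a - 1 \<and> sum_list e = E \<and> gen_maj1 a e)
         \<longleftrightarrow> (E = sum_list (drop 1 a) \<or> E \<ge> a ! 0 + sum_list (drop 2 a))"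
proof -
  define m where "m = length a"
  have m2: "m \<ge> 2" using assms(2) m_def by simp
  have mono: "\<And>i j. i \<le> j \<Longrightarrow> j < m \<Longrightarrow> a!j \<le> a!i"
    using assms(1) unfolding is_partition_def m_def
    by (metis le_eq_less_or_eq order_refl sorted_wrt_nth_less)
  have d1: "sum_list (drop 1 a) = (\<Sum>i=1..<m. a!i)" by (simp add: sum_list_drop_nth m_def)
  have d2: "sum_list (drop 2 a) = (\<Sum>i=2..<m. a!i)" by (simp add: sum_list_drop_nth m_def)
  show ?thesis
  proof
    assume "\<exists>e. is_partition e \<and> length e = length a - 1 \<and> sum_list e = E \<and> gen_maj1 a e"
    then obtain e where le: "length e = m - 1" and sE: "sum_list e = E" and g: "gen_maj1 a e"
      using m_def by auto
    define h where "h = (LEAST i. i < m \<and> (i = m - 1 \<or> e ! i < a ! i))"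
    have eq: "\<And>i. h \<le> i \<Longrightarrow> i < m - 1 \<Longrightarrow> e ! i = a ! (i + 1)"
      using g unfolding gen_maj1_def Let_def h_def m_def by blast
    have hle: "h \<le> m - 1" unfolding h_def
      by (rule Least_le) (use m2 in auto)
    have ge: "\<And>i. i < h \<Longrightarrow> a!i \<le> e!i"
    proof -
      fix i assume "i < h"
      then have "\<not> (i < m \<and> (i = m - 1 \<or> e ! i < a ! i))"
        unfolding h_def using not_less_Least by blast
      then show "a!i \<le> e!i" using \<open>i < h\<close> hle by auto
    qed
    have Esplit: "E = (\<Sum>i<h. e!i) + (\<Sum>i=h..<m-1. e!i)"
    proof -
      have "E = (\<Sum>i=0..<m-1. e!i)" using sE le by (simp add: sum_list_sum_nth)
      also have "\<dots> = (\<Sum>i=0..<h. e!i) + (\<Sum>i=h..<m-1. e!i)"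
        using hle by (intro sum.atLeastLessThan_concat[symmetric]) auto
      finally show ?thesis by (simp add: atLeast0LessThan)
    qed
    have tail: "(\<Sum>i=h..<m-1. e!i) = (\<Sum>i=h+1..<m. a!i)"
    proof -
      have "(\<Sum>i=h..<m-1. e!i) = (\<Sum>i=h..<m-1. a!(i+1))" using eq by (intro sum.cong) auto
      also have "\<dots> = (\<Sum>i=h+1..<m. a!i)"
        using sum.shift_bounds_nat_ivl[of "\<lambda>i. a!i" h 1 "m-1"] m2 by simp
      finally show ?thesis .
    qed
    show "E = sum_list (drop 1 a) \<or> E \<ge> a ! 0 + sum_list (drop 2 a)"
    proof (cases "h = 0")
      case True
      then show ?thesis using Esplit tail d1 by simp
    next
      case False
      have A: "(\<Sum>i<h. a!i) \<le> (\<Sum>i<h. e!i)" using ge by (intro sum_mono) auto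
      have B: "(\<Sum>i<h. a!i) = a!0 + (\<Sum>i=1..<h. a!i)"
        using False by (simp add: lessThan_atLeast0 sum.atLeast_Suc_lessThan)
      have C: "(\<Sum>i=2..<h+1. a!i) \<le> (\<Sum>i=1..<h. a!i)"
      proof -
        have "(\<Sum>i=2..<h+1. a!i) = (\<Sum>i=1..<h. a!(i+1))"
          using sum.shift_bounds_nat_ivl[of "\<lambda>i. a!i" 1 1 h] by (simp add: numeral_2_eq_2)
        also have "\<dots> \<le> (\<Sum>i=1..<h. a!i)" using hle mono by (intro sum_mono) auto
        finally show ?thesis .
      qed
      have D: "(\<Sum>i=2..<m. a!i) = (\<Sum>i=2..<h+1. a!i) + (\<Sum>i=h+1..<m. a!i)"
        using False hle m2 by (intro sum.atLeastLessThan_concat[symmetric]) auto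
      have "a ! 0 + sum_list (drop 2 a) \<le> E"
        using A B C D d2 Esplit tail by linarith
      then show ?thesis by simp
    qed
  next
    assume "E = sum_list (drop 1 a) \<or> E \<ge> a ! 0 + sum_list (drop 2 a)"
    then show "\<exists>e. is_partition e \<and> length e = length a - 1 \<and> sum_list e = E \<and> gen_maj1 a e"
    proof
      assume E: "E = sum_list (drop 1 a)"
      show ?thesis
      proof (intro exI conjI)
        show "is_partition (drop 1 a)" using assms(1) unfolding is_partition_def
          by (simp add: sorted_wrt_drop)
        show "gen_maj1 a (drop 1 a)" unfolding gen_maj1_def Let_def by auto
      qed (use E in auto)
    next
      assume E: "E \<ge> a ! 0 + sum_list (drop 2 a)"
      define e where "e = (E - sum_list (drop 2 a)) # drop 2 a"
      have a0: "a = a!0 # a!1 # drop 2 a" using m2 m_def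
        by (metis Cons_nth_drop_Suc One_nat_def Suc_1 drop0 less_2_cases_iff less_le_trans numeral_2_eq_2 zero_less_Suc)
      have part: "is_partition e"
      proof -
        have "sorted_wrt (\<ge>) a" using assms(1) is_partition_def by blast
        then have "\<forall>x\<in>set (drop 2 a). x \<le> a!0" "sorted_wrt (\<ge>) (drop 2 a)"
          by (metis a0 sorted_wrt.simps(2) set_subset_Cons subsetD)+
        then show ?thesis unfolding e_def is_partition_def using E by auto
      qed
      have g: "gen_maj1 a e"
      proof -
        define h where "h = (LEAST i. i < m \<and> (i = m - 1 \<or> e ! i < a ! i))"
        have "h \<noteq> 0"
        proof
          assume "h = 0"
          have ex: "\<exists>i. i < m \<and> (i = m - 1 \<or> e ! i < a ! i)" using m2 by (intro exI[of _ "m-1"]) auto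
          have "0 < m \<and> (0 = m - 1 \<or> e ! 0 < a ! 0)"
            using LeastI_ex[OF ex] \<open>h = 0\<close> h_def by simp
          then show False using m2 E unfolding e_def by auto
        qed
        moreover have "\<And>i. 1 \<le> i \<Longrightarrow> i < m - 1 \<Longrightarrow> e ! i = a ! (i + 1)"
        proof -
          fix i assume "1 \<le> i" "i < m - 1"
          then obtain j where "i = Suc j" by (cases i) auto
          then show "e ! i = a ! (i + 1)" unfolding e_def using \<open>i < m - 1\<close> m_def by simp
        qed
        ultimately show ?thesis unfolding gen_maj1_def Let_def
          using e_def m_def h_def m2 by auto
      qed
      show ?thesis
      proof (intro exI conjI)
        show "is_partition e" by (rule part)
        show "gen_maj1 a e" by (rule g)
        show "length e = length a - 1" unfolding e_def using m2 m_def by simp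
        show "sum_list e = E" unfolding e_def using E by simp
      qed
    qed
  qed
qed

end
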